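(* $\mathcal{C}_2(8,4,3)\le 6897$.
   Context: $\mathcal{C}_q(n,k,r)$ is the minimum number of $k$-dimensional subspaces of $\mathbb{F}_q^n$ such that every $r$-dimensional subspace of $\mathbb{F}_q^n$ is contained in at least one of them. *)

theory Defs
  imports Main "HOL-Library.Z2"
begin

text \<open>Vectors of F^n are represented as functions nat => F vanishing outside {0..<n}.\<close>

definition vecs :: "nat \<Rightarrow> (nat \<Rightarrow> 'a::field) set" where
  "vecs n = {v. \<forall>i\<ge>n. v i = 0}"

definition lin_comb :: "'a::field list \<Rightarrow> (nat \<Rightarrow> 'a) list \<Rightarrow> (nat \<Rightarrow> 'a)" where
  "lin_comb cs vs = (\<lambda>j. \<Sum>i<length vs. cs ! i * (vs ! i) j)"

definition span_of :: "(nat \<Rightarrow> 'a::field) list \<Rightarrow> (nat \<Rightarrow> 'a) set" where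
  "span_of vs = {lin_comb cs vs | cs. length cs = length vs}"

definition lin_indep :: "(nat \<Rightarrow> 'a::field) list \<Rightarrow> bool" where
  "lin_indep vs = (\<forall>cs. length cs = length vs \<longrightarrow> lin_comb cs vs = (\<lambda>_. 0) \<longrightarrow> (\<forall>c\<in>set cs. c = 0))"

definition subspaces_dim :: "'a::field itself \<Rightarrow> nat \<Rightarrow> nat \<Rightarrow> (nat \<Rightarrow> 'a) set set" where
  "subspaces_dim _ n k = {S. \<exists>vs. length vs = k \<and> set vs \<subseteq> vecs n \<and> lin_indep vs \<and> S = span_of vs}"

definition covering_number :: "'a::field itself \<Rightarrow> nat \<Rightarrow> nat \<Rightarrow> nat \<Rightarrow> nat" where
  "covering_number F n k r = (LEAST m. \<exists>\<F>. \<F> \<subseteq> subspaces_dim F n k \<and> finite \<F> \<and> card \<F> = m \<and>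
       (\<forall>R\<in>subspaces_dim F n r. \<exists>K\<in>\<F>. R \<subseteq> K))"

end

theory Submission
  imports Defs "HOL-Library.Function_Algebras"
begin


declare add_bit_eq_xor[simp del] mult_bit_eq_and[simp del]

lemma all_bit: "(\<forall>x::bit. P x) = (P 0 \<and> P 1)"
  by (metis bit.exhaust)
lemma ex_bit: "(\<exists>x::bit. P x) = (P 0 \<or> P 1)"
  by (metis bit.exhaust)

lemma bit_add_self [simp]: "(x::bit) + x = 0"
  by (cases x) simp_all

lemma vadd_self [simp]: "(v::nat\<Rightarrow>bit) + v = 0"
  by (rule ext) simp

lemma vadd_self2 [simp]: "(v::nat\<Rightarrow>bit) + (v + w) = w"
  by (simp add: add.assoc[symmetric])

lemma lin_comb3: "lin_comb [a,b,c] [u,v,w] = (\<lambda>j. a * u j + b * v j + c * w j)"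
  by (simp add: lin_comb_def numeral_3_eq_3 lessThan_Suc add_ac)

lemma lin_comb4: "lin_comb [a,b,c,d] [u,v,w,x] = (\<lambda>j. a * u j + b * v j + c * w j + d * x j)"
  by (simp add: lin_comb_def numeral_eq_Suc lessThan_Suc add_ac)

lemma len3_cases: "length cs = 3 \<Longrightarrow> \<exists>a b c. cs = [a,b,c]"
  by (cases cs; cases "tl cs"; cases "tl (tl cs)"; auto)
lemma len4_cases: "length cs = 4 \<Longrightarrow> \<exists>a b c d. cs = [a,b,c,d]"
  by (cases cs; cases "tl cs"; cases "tl (tl cs)"; cases "tl (tl (tl cs))"; auto simp: numeral_eq_Suc)

lemma scal: "(a::bit) * x = (if a = 0 then 0 else x)"
  by (cases a) simp_all

lemma span3: "span_of [u,v,w::nat\<Rightarrow>bit] = {0, u, v, w, u+v, u+w, v+w, u+v+w}"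
proof -
  have "span_of [u,v,w] = {lin_comb [a,b,c] [u,v,w] | a b c. True}"
    unfolding span_of_def
  proof (rule set_eqI, rule iffI)
    fix y assume "y \<in> {lin_comb cs [u,v,w] |cs. length cs = length [u,v,w]}"
    then obtain cs where y: "y = lin_comb cs [u,v,w]" "length cs = 3" by auto
    then obtain a b c where "cs = [a,b,c]" using len3_cases by blast
    then show "y \<in> {lin_comb [a,b,c] [u,v,w] | a b c. True}" using y by auto
  next
    fix y assume "y \<in> {lin_comb [a,b,c] [u,v,w] | a b c. True}"
    then show "y \<in> {lin_comb cs [u,v,w] |cs. length cs = length [u,v,w]}" by force
  qed
  also have "\<dots> = {0, u, v, w, u+v, u+w, v+w, u+v+w}"
  proof (rule set_eqI, rule iffI)
    fix y assume "y \<in> {lin_comb [a,b,c] [u,v,w] | a b c. True}"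
    then obtain a b c where y: "y = lin_comb [a,b,c] [u,v,w]" by auto
    show "y \<in> {0, u, v, w, u+v, u+w, v+w, u+v+w}" unfolding y lin_comb3
      by (cases a; cases b; cases c) (simp_all only: plus_fun_def zero_fun_def mult_zero_left mult_1_left add_0_left add_0_right insert_iff simp_thms)
  next
    fix y assume "y \<in> {0, u, v, w, u+v, u+w, v+w, u+v+w}"
    then show "y \<in> {lin_comb [a,b,c] [u,v,w] | a b c. True}"
      apply (elim insertE emptyE)
      apply (rule CollectI, rule exI[of _ 0], rule exI[of _ 0], rule exI[of _ 0], simp only: lin_comb3 plus_fun_def zero_fun_def mult_zero_left mult_1_left add_0_left add_0_right insert_iff simp_thms)
      apply (rule CollectI, rule exI[of _ 1], rule exI[of _ 0], rule exI[of _ 0], simp only: lin_comb3 plus_fun_def zero_fun_def mult_zero_left mult_1_left add_0_left add_0_right insert_iff simp_thms)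
      apply (rule CollectI, rule exI[of _ 0], rule exI[of _ 1], rule exI[of _ 0], simp only: lin_comb3 plus_fun_def zero_fun_def mult_zero_left mult_1_left add_0_left add_0_right insert_iff simp_thms)
      apply (rule CollectI, rule exI[of _ 0], rule exI[of _ 0], rule exI[of _ 1], simp only: lin_comb3 plus_fun_def zero_fun_def mult_zero_left mult_1_left add_0_left add_0_right insert_iff simp_thms)
      apply (rule CollectI, rule exI[of _ 1], rule exI[of _ 1], rule exI[of _ 0], simp only: lin_comb3 plus_fun_def zero_fun_def mult_zero_left mult_1_left add_0_left add_0_right insert_iff simp_thms)
      apply (rule CollectI, rule exI[of _ 1], rule exI[of _ 0], rule exI[of _ 1], simp only: lin_comb3 plus_fun_def zero_fun_def mult_zero_left mult_1_left add_0_left add_0_right insert_iff simp_thms)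
      apply (rule CollectI, rule exI[of _ 0], rule exI[of _ 1], rule exI[of _ 1], simp only: lin_comb3 plus_fun_def zero_fun_def mult_zero_left mult_1_left add_0_left add_0_right insert_iff simp_thms)
      apply (rule CollectI, rule exI[of _ 1], rule exI[of _ 1], rule exI[of _ 1], simp only: lin_comb3 plus_fun_def zero_fun_def mult_zero_left mult_1_left add_0_left add_0_right insert_iff simp_thms)
      done
  qed
  finally show ?thesis .
qed

lemma span4: "span_of [u,v,w,x::nat\<Rightarrow>bit] = {0, u, v, w, x, u+v, u+w, u+x, v+w, v+x, w+x, u+v+w, u+v+x, u+w+x, v+w+x, u+v+w+x}"
proof -
  have "span_of [u,v,w,x] = {lin_comb [a,b,c,d] [u,v,w,x] | a b c d. True}"
    unfolding span_of_def
  proof (rule set_eqI, rule iffI)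
    fix y assume "y \<in> {lin_comb cs [u,v,w,x] |cs. length cs = length [u,v,w,x]}"
    then obtain cs where y: "y = lin_comb cs [u,v,w,x]" "length cs = 4" by auto
    then obtain a b c d where "cs = [a,b,c,d]" using len4_cases by blast
    then show "y \<in> {lin_comb [a,b,c,d] [u,v,w,x] | a b c d. True}" using y by auto
  next
    fix y assume "y \<in> {lin_comb [a,b,c,d] [u,v,w,x] | a b c d. True}"
    then show "y \<in> {lin_comb cs [u,v,w,x] |cs. length cs = length [u,v,w,x]}" by force
  qed
  also have "\<dots> = {0, u, v, w, x, u+v, u+w, u+x, v+w, v+x, w+x, u+v+w, u+v+x, u+w+x, v+w+x, u+v+w+x}"
  proof (rule set_eqI, rule iffI)
    fix y assume "y \<in> {lin_comb [a,b,c,d] [u,v,w,x] | a b c d. True}"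
    then obtain a b c d where y: "y = lin_comb [a,b,c,d] [u,v,w,x]" by auto
    show "y \<in> {0, u, v, w, x, u+v, u+w, u+x, v+w, v+x, w+x, u+v+w, u+v+x, u+w+x, v+w+x, u+v+w+x}" unfolding y lin_comb4
      by (cases a; cases b; cases c; cases d) (simp_all only: plus_fun_def zero_fun_def mult_zero_left mult_1_left add_0_left add_0_right insert_iff simp_thms)
  next
    fix y assume "y \<in> {0, u, v, w, x, u+v, u+w, u+x, v+w, v+x, w+x, u+v+w, u+v+x, u+w+x, v+w+x, u+v+w+x}"
    then show "y \<in> {lin_comb [a,b,c,d] [u,v,w,x] | a b c d. True}"
      apply (elim insertE emptyE)
      apply (rule CollectI, rule exI[of _ 0], rule exI[of _ 0], rule exI[of _ 0], rule exI[of _ 0], simp only: lin_comb4 plus_fun_def zero_fun_def mult_zero_left mult_1_left add_0_left add_0_right insert_iff simp_thms)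
      apply (rule CollectI, rule exI[of _ 1], rule exI[of _ 0], rule exI[of _ 0], rule exI[of _ 0], simp only: lin_comb4 plus_fun_def zero_fun_def mult_zero_left mult_1_left add_0_left add_0_right insert_iff simp_thms)
      apply (rule CollectI, rule exI[of _ 0], rule exI[of _ 1], rule exI[of _ 0], rule exI[of _ 0], simp only: lin_comb4 plus_fun_def zero_fun_def mult_zero_left mult_1_left add_0_left add_0_right insert_iff simp_thms)
      apply (rule CollectI, rule exI[of _ 0], rule exI[of _ 0], rule exI[of _ 1], rule exI[of _ 0], simp only: lin_comb4 plus_fun_def zero_fun_def mult_zero_left mult_1_left add_0_left add_0_right insert_iff simp_thms)
      apply (rule CollectI, rule exI[of _ 0], rule exI[of _ 0], rule exI[of _ 0], rule exI[of _ 1], simp only: lin_comb4 plus_fun_def zero_fun_def mult_zero_left mult_1_left add_0_left add_0_right insert_iff simp_thms)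
      apply (rule CollectI, rule exI[of _ 1], rule exI[of _ 1], rule exI[of _ 0], rule exI[of _ 0], simp only: lin_comb4 plus_fun_def zero_fun_def mult_zero_left mult_1_left add_0_left add_0_right insert_iff simp_thms)
      apply (rule CollectI, rule exI[of _ 1], rule exI[of _ 0], rule exI[of _ 1], rule exI[of _ 0], simp only: lin_comb4 plus_fun_def zero_fun_def mult_zero_left mult_1_left add_0_left add_0_right insert_iff simp_thms)
      apply (rule CollectI, rule exI[of _ 1], rule exI[of _ 0], rule exI[of _ 0], rule exI[of _ 1], simp only: lin_comb4 plus_fun_def zero_fun_def mult_zero_left mult_1_left add_0_left add_0_right insert_iff simp_thms)
      apply (rule CollectI, rule exI[of _ 0], rule exI[of _ 1], rule exI[of _ 1], rule exI[of _ 0], simp only: lin_comb4 plus_fun_def zero_fun_def mult_zero_left mult_1_left add_0_left add_0_right insert_iff simp_thms)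
      apply (rule CollectI, rule exI[of _ 0], rule exI[of _ 1], rule exI[of _ 0], rule exI[of _ 1], simp only: lin_comb4 plus_fun_def zero_fun_def mult_zero_left mult_1_left add_0_left add_0_right insert_iff simp_thms)
      apply (rule CollectI, rule exI[of _ 0], rule exI[of _ 0], rule exI[of _ 1], rule exI[of _ 1], simp only: lin_comb4 plus_fun_def zero_fun_def mult_zero_left mult_1_left add_0_left add_0_right insert_iff simp_thms)
      apply (rule CollectI, rule exI[of _ 1], rule exI[of _ 1], rule exI[of _ 1], rule exI[of _ 0], simp only: lin_comb4 plus_fun_def zero_fun_def mult_zero_left mult_1_left add_0_left add_0_right insert_iff simp_thms)
      apply (rule CollectI, rule exI[of _ 1], rule exI[of _ 1], rule exI[of _ 0], rule exI[of _ 1], simp only: lin_comb4 plus_fun_def zero_fun_def mult_zero_left mult_1_left add_0_left add_0_right insert_iff simp_thms)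
      apply (rule CollectI, rule exI[of _ 1], rule exI[of _ 0], rule exI[of _ 1], rule exI[of _ 1], simp only: lin_comb4 plus_fun_def zero_fun_def mult_zero_left mult_1_left add_0_left add_0_right insert_iff simp_thms)
      apply (rule CollectI, rule exI[of _ 0], rule exI[of _ 1], rule exI[of _ 1], rule exI[of _ 1], simp only: lin_comb4 plus_fun_def zero_fun_def mult_zero_left mult_1_left add_0_left add_0_right insert_iff simp_thms)
      apply (rule CollectI, rule exI[of _ 1], rule exI[of _ 1], rule exI[of _ 1], rule exI[of _ 1], simp only: lin_comb4 plus_fun_def zero_fun_def mult_zero_left mult_1_left add_0_left add_0_right insert_iff simp_thms)
      done
  qed
  finally show ?thesis .
qed



definition vc :: "nat \<Rightarrow> nat \<Rightarrow> bit" where "vc n = (\<lambda>i. if i < 4 \<and> bit n i then 1 else 0)"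

lemma bit_one_add_one: "(1::bit) + 1 = 0" by simp

lemma vc_add: "vc m + vc n = vc (xor m n)"
  by (rule ext) (auto simp: vc_def bit_xor_iff)

lemma vc_0 [simp]: "vc 0 = 0" by (rule ext) (simp add: vc_def)

lemma vc_vecs [simp]: "vc n \<in> vecs 4" by (simp add: vecs_def vc_def)

lemma lt4: "(i::nat) < 4 \<longleftrightarrow> i = 0 \<or> i = 1 \<or> i = 2 \<or> i = 3" by auto

lemma vecs4_eq: assumes "v \<in> vecs 4" "w \<in> vecs 4" shows "v = w \<longleftrightarrow> (v 0 = w 0 \<and> v 1 = w 1 \<and> v 2 = w 2 \<and> v 3 = w 3)"
proof
  assume "v 0 = w 0 \<and> v 1 = w 1 \<and> v 2 = w 2 \<and> v 3 = w 3"
  with assms show "v = w"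
    apply -
    apply (rule ext)
    apply (case_tac "x < 4")
     apply (auto simp: lt4 vecs_def)
    done
qed simp

lemma bit_ge4: "(m::nat) < 16 \<Longrightarrow> 4 \<le> i \<Longrightarrow> \<not> bit m i"
proof -
  assume m: "m < 16" and i: "4 \<le> i"
  have "(16::nat) \<le> 2 ^ i" using power_increasing[OF i, of "2::nat"] by simp
  then have "m div 2 ^ i = 0" using m by simp
  then show ?thesis by (simp add: bit_iff_odd)
qed

lemma vc_inj: "m < 16 \<Longrightarrow> n < 16 \<Longrightarrow> vc m = vc n \<Longrightarrow> m = n"
proof -
  assume m: "m < 16" and n: "n < 16" and e: "vc m = vc n"
  show "m = n"
  proof (rule bit_eqI)
    fix i
    show "bit m i = bit n i"
    proof (cases "i < 4")
      case True
      have "vc m i = vc n i" using e by simp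
      then show ?thesis using True by (auto simp: vc_def split: if_splits)
    next
      case False
      then show ?thesis using bit_ge4[OF m] bit_ge4[OF n] by simp
    qed
  qed
qed

lemma vc_eq_iff: "m < 16 \<Longrightarrow> n < 16 \<Longrightarrow> vc m = vc n \<longleftrightarrow> m = n"
  using vc_inj by blast

lemma UNIV_bit: "(UNIV :: bit set) = {0, 1}"
  by (auto intro: bit.exhaust)
lemma card_UNIV_bit: "card (UNIV :: bit set) = 2"
  by (simp add: UNIV_bit)
lemma finite_UNIV_bit: "finite (UNIV :: bit set)"
  by (simp add: UNIV_bit)

definition vec4 :: "bit \<Rightarrow> bit \<Rightarrow> bit \<Rightarrow> bit \<Rightarrow> nat \<Rightarrow> bit" where
  "vec4 a b c d = (\<lambda>i. if i = 0 then a else if i = 1 then b else if i = 2 then c else if i = 3 then d else 0)"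

lemma vecs4_vec4: "v \<in> vecs 4 \<Longrightarrow> v = vec4 (v 0) (v 1) (v 2) (v 3)"
  by (rule ext) (auto simp: vec4_def vecs_def)

lemma card_vecs4: "card (vecs 4 :: (nat \<Rightarrow> bit) set) = 16" and finite_vecs4: "finite (vecs 4 :: (nat \<Rightarrow> bit) set)"
  and vecs4_img: "vecs 4 = vc ` {..<16}"
proof -
  have sub: "vecs 4 \<subseteq> (\<lambda>(a,b,c,d). vec4 a b c d) ` (UNIV :: (bit\<times>bit\<times>bit\<times>bit) set)"
  proof
    fix v :: "nat \<Rightarrow> bit" assume "v \<in> vecs 4"
    then show "v \<in> (\<lambda>(a,b,c,d). vec4 a b c d) ` UNIV"
      using vecs4_vec4 by (auto intro!: image_eqI[of _ _ "(v 0, v 1, v 2, v 3)"])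
  qed
  have fU: "finite (UNIV :: (bit\<times>bit\<times>bit\<times>bit) set)"
    by (simp only: UNIV_Times_UNIV[symmetric]) (intro finite_cartesian_product finite_UNIV_bit)
  have cU: "card (UNIV :: (bit\<times>bit\<times>bit\<times>bit) set) = 16"
    by (simp only: UNIV_Times_UNIV[symmetric] card_cartesian_product card_UNIV_bit)
  show fin: "finite (vecs 4 :: (nat \<Rightarrow> bit) set)" using finite_subset[OF sub] fU by blast
  have le: "card (vecs 4 :: (nat \<Rightarrow> bit) set) \<le> 16"
    using card_mono[OF finite_imageI[OF fU] sub] card_image_le[OF fU, of "\<lambda>(a,b,c,d). vec4 a b c d"] cU by linarith
  have inj: "inj_on vc {..<16}" by (auto intro!: inj_onI vc_inj)
  have c16: "card (vc ` {..<16}) = 16" using card_image[OF inj] by simp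
  have sub2: "vc ` {..<16} \<subseteq> vecs 4" by auto
  have "vc ` {..<16} = vecs 4"
    using card_subset_eq[OF fin sub2] c16 le card_mono[OF fin sub2] by simp
  then show "vecs 4 = vc ` {..<16}" by simp
  then show "card (vecs 4 :: (nat \<Rightarrow> bit) set) = 16" using c16 by simp
qed

lemma vc_surj: "v \<in> vecs 4 \<Longrightarrow> \<exists>n<16. v = vc n"
  using vecs4_img by auto

definition pair :: "(nat \<Rightarrow> bit) \<Rightarrow> (nat \<Rightarrow> bit) \<Rightarrow> nat \<Rightarrow> bit" where
  "pair x y = (\<lambda>i. if i < 4 then x i else if i < 8 then y (i - 4) else 0)"
definition xp :: "(nat \<Rightarrow> bit) \<Rightarrow> nat \<Rightarrow> bit" where "xp v = (\<lambda>i. if i < 4 then v i else 0)"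
definition yp :: "(nat \<Rightarrow> bit) \<Rightarrow> nat \<Rightarrow> bit" where "yp v = (\<lambda>i. if i < 4 then v (i + 4) else 0)"

lemma pair_add: "pair x y + pair x' y' = pair (x + x') (y + y')"
  by (rule ext) (simp add: pair_def)
lemma pair_0: "pair 0 0 = 0"
  by (rule ext) (simp add: pair_def)
lemma xp_add: "xp (v + w) = xp v + xp w" by (rule ext) (simp add: xp_def)
lemma yp_add: "yp (v + w) = yp v + yp w" by (rule ext) (simp add: yp_def)
lemma xp_0 [simp]: "xp 0 = 0" by (rule ext) (simp add: xp_def)
lemma yp_0 [simp]: "yp 0 = 0" by (rule ext) (simp add: yp_def)
lemma pair_vecs [simp]: "pair x y \<in> vecs 8" by (simp add: vecs_def pair_def)
lemma xp_vecs [simp]: "xp v \<in> vecs 4" by (simp add: vecs_def xp_def)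
lemma yp_vecs [simp]: "yp v \<in> vecs 4" by (simp add: vecs_def yp_def)
lemma vecs8_pair: "v \<in> vecs 8 \<Longrightarrow> pair (xp v) (yp v) = v"
  by (rule ext) (auto simp: pair_def xp_def yp_def vecs_def)
lemma xp_pair [simp]: "x \<in> vecs 4 \<Longrightarrow> xp (pair x y) = x"
  by (rule ext) (auto simp: pair_def xp_def vecs_def)
lemma yp_pair [simp]: "y \<in> vecs 4 \<Longrightarrow> yp (pair x y) = y"
  by (rule ext) (auto simp: pair_def yp_def vecs_def)
lemma vecs_add: "v \<in> vecs n \<Longrightarrow> w \<in> vecs n \<Longrightarrow> (v::nat\<Rightarrow>bit) + w \<in> vecs n"
  by (simp add: vecs_def)
lemma vecs_zero [simp]: "(0::nat\<Rightarrow>bit) \<in> vecs n"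
  by (simp add: vecs_def)

lemma lin_comb_add: "length cs = length vs \<Longrightarrow> length ds = length vs \<Longrightarrow>
   lin_comb cs vs + lin_comb ds vs = lin_comb (map2 (+) cs ds) vs"
  by (rule ext) (simp add: lin_comb_def sum.distrib[symmetric] distrib_right)

lemma span_add: "x \<in> span_of vs \<Longrightarrow> y \<in> span_of vs \<Longrightarrow> x + y \<in> span_of vs"
  unfolding span_of_def
  apply clarify
  apply (rename_tac cs ds)
  apply (rule_tac x="map2 (+) cs ds" in exI)
  apply (simp add: lin_comb_add)
  done

lemma span_0: "0 \<in> span_of vs"
  unfolding span_of_def
  apply (rule CollectI)
  apply (rule_tac x="replicate (length vs) 0" in exI)
  apply (simp add: lin_comb_def zero_fun_def)
  done

definition closed :: "(nat \<Rightarrow> bit) set \<Rightarrow> bool" where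
  "closed K \<longleftrightarrow> 0 \<in> K \<and> (\<forall>x\<in>K. \<forall>y\<in>K. x + y \<in> K)"

lemma closed_span: "closed (span_of vs)"
  unfolding closed_def using span_0 span_add by blast

lemma span3_sub: "closed K \<Longrightarrow> u \<in> K \<Longrightarrow> v \<in> K \<Longrightarrow> w \<in> K \<Longrightarrow> span_of [u,v,w] \<subseteq> K"
  unfolding span3 closed_def by auto

lemma span4_sub: "closed K \<Longrightarrow> u \<in> K \<Longrightarrow> v \<in> K \<Longrightarrow> w \<in> K \<Longrightarrow> x \<in> K \<Longrightarrow> span_of [u,v,w,x] \<subseteq> K"
  unfolding span4 closed_def by auto

lemma closed_vecs: "closed (vecs n)"
  unfolding closed_def by (simp add: vecs_add)

lemma card_span_indep: "lin_indep (vs :: (nat \<Rightarrow> bit) list) \<Longrightarrow> card (span_of vs) = 2 ^ length vs"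
proof -
  assume ind: "lin_indep vs"
  let ?A = "{cs :: bit list. set cs \<subseteq> UNIV \<and> length cs = length vs}"
  have e: "span_of vs = (\<lambda>cs. lin_comb cs vs) ` ?A" unfolding span_of_def by auto
  have "inj_on (\<lambda>cs. lin_comb cs vs) ?A"
  proof (rule inj_onI)
    fix cs ds assume cs: "cs \<in> ?A" and ds: "ds \<in> ?A" and eq: "lin_comb cs vs = lin_comb ds vs"
    have l: "length (map2 (+) cs ds) = length vs" using cs ds by simp
    have "lin_comb (map2 (+) cs ds) vs = lin_comb cs vs + lin_comb ds vs"
      using cs ds by (simp add: lin_comb_add)
    also have "\<dots> = (\<lambda>_. 0)" using eq by (simp add: zero_fun_def[symmetric])
    finally have "\<forall>c\<in>set (map2 (+) cs ds). c = 0" using ind l unfolding lin_indep_def by blast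
    then have z: "\<forall>i<length vs. cs ! i + ds ! i = 0" using cs ds
      by (auto simp: set_conv_nth)
    show "cs = ds"
    proof (rule nth_equalityI)
      show "length cs = length ds" using cs ds by simp
      fix i assume "i < length cs"
      then have "cs ! i + ds ! i = 0" using z cs by simp
      then show "cs ! i = ds ! i"
        by (cases "cs ! i"; cases "ds ! i") simp_all
    qed
  qed
  then have "card (span_of vs) = card ?A" unfolding e by (rule card_image)
  also have "\<dots> = 2 ^ length vs"
    using card_lists_length_eq[OF finite_UNIV_bit, of "length vs"] by (simp add: card_UNIV_bit)
  finally show ?thesis .
qed

lemma indep3: "lin_indep [u,v,w::nat\<Rightarrow>bit] \<longleftrightarrow>
  u \<noteq> 0 \<and> v \<noteq> 0 \<and> w \<noteq> 0 \<and> u+v \<noteq> 0 \<and> u+w \<noteq> 0 \<and> v+w \<noteq> 0 \<and> u+v+w \<noteq> 0"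
proof -
  have "lin_indep [u,v,w] \<longleftrightarrow> (\<forall>a b c. lin_comb [a,b,c] [u,v,w] = 0 \<longrightarrow> a = 0 \<and> b = 0 \<and> c = 0)"
    unfolding lin_indep_def zero_fun_def[symmetric]
    apply (rule iffI)
     apply (intro allI impI)
     apply (rename_tac a b c, erule_tac x="[a,b,c]" in allE, simp)
    apply (intro allI impI)
    apply (rename_tac cs)
    apply (subgoal_tac "\<exists>a b c. cs = [a,b,c]")
     apply (elim exE, simp)
    apply (rule len3_cases, simp)
    done
  also have "\<dots> \<longleftrightarrow> u \<noteq> 0 \<and> v \<noteq> 0 \<and> w \<noteq> 0 \<and> u+v \<noteq> 0 \<and> u+w \<noteq> 0 \<and> v+w \<noteq> 0 \<and> u+v+w \<noteq> 0"
    unfolding lin_comb3 all_bit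
    by (simp only: plus_fun_def zero_fun_def mult_zero_left mult_1_left add_0_left add_0_right simp_thms one_neq_zero zero_neq_one conj_ac)
  finally show ?thesis .
qed



lemma indep4: "lin_indep [u,v,w,x::nat\<Rightarrow>bit] \<longleftrightarrow>
  u \<noteq> 0 \<and> v \<noteq> 0 \<and> w \<noteq> 0 \<and> x \<noteq> 0 \<and> u+v \<noteq> 0 \<and> u+w \<noteq> 0 \<and> u+x \<noteq> 0 \<and> v+w \<noteq> 0 \<and> v+x \<noteq> 0 \<and> w+x \<noteq> 0 \<and>
  u+v+w \<noteq> 0 \<and> u+v+x \<noteq> 0 \<and> u+w+x \<noteq> 0 \<and> v+w+x \<noteq> 0 \<and> u+v+w+x \<noteq> 0"
proof -
  have "lin_indep [u,v,w,x] \<longleftrightarrow> (\<forall>a b c d. lin_comb [a,b,c,d] [u,v,w,x] = 0 \<longrightarrow> a = 0 \<and> b = 0 \<and> c = 0 \<and> d = 0)"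
    unfolding lin_indep_def zero_fun_def[symmetric]
    apply (rule iffI)
     apply (intro allI impI)
     apply (rename_tac a b c d, erule_tac x="[a,b,c,d]" in allE, simp)
    apply (intro allI impI)
    apply (rename_tac cs)
    apply (subgoal_tac "\<exists>a b c d. cs = [a,b,c,d]")
     apply (elim exE, simp)
    apply (rule len4_cases, simp)
    done
  also have "\<dots> \<longleftrightarrow> u \<noteq> 0 \<and> v \<noteq> 0 \<and> w \<noteq> 0 \<and> x \<noteq> 0 \<and> u+v \<noteq> 0 \<and> u+w \<noteq> 0 \<and> u+x \<noteq> 0 \<and> v+w \<noteq> 0 \<and> v+x \<noteq> 0 \<and> w+x \<noteq> 0 \<and>
  u+v+w \<noteq> 0 \<and> u+v+x \<noteq> 0 \<and> u+w+x \<noteq> 0 \<and> v+w+x \<noteq> 0 \<and> u+v+w+x \<noteq> 0"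
    unfolding lin_comb4 all_bit
    by (simp only: plus_fun_def zero_fun_def mult_zero_left mult_1_left add_0_left add_0_right simp_thms one_neq_zero zero_neq_one conj_ac)
  finally show ?thesis .
qed

definition ev :: "nat \<Rightarrow> nat \<Rightarrow> bit" where "ev k = (\<lambda>i. if i = k then 1 else 0)"
definition smul :: "bit \<Rightarrow> (nat \<Rightarrow> bit) \<Rightarrow> nat \<Rightarrow> bit" where "smul a v = (\<lambda>j. a * v j)"

lemma smul_0 [simp]: "smul 0 v = 0" by (rule ext) (simp add: smul_def)
lemma smul_1 [simp]: "smul 1 v = v" by (rule ext) (simp add: smul_def)
lemma smul_add: "smul a (v + w) = smul a v + smul a w" by (rule ext) (simp only: smul_def plus_fun_apply distrib_left)
lemma smul_add2: "smul (a + b) v = smul a v + smul b v" by (rule ext) (simp only: smul_def plus_fun_apply distrib_right)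
lemma smul_z [simp]: "smul a 0 = 0" by (rule ext) (simp add: smul_def)
lemma smul_vecs [simp]: "v \<in> vecs n \<Longrightarrow> smul a v \<in> vecs n" by (simp add: smul_def vecs_def)
lemma ev_vecs [simp]: "k < 4 \<Longrightarrow> ev k \<in> vecs 4" by (simp add: ev_def vecs_def)

lemma vec4_vecs [simp]: "vec4 a b c d \<in> vecs 4" by (simp add: vec4_def vecs_def)

definition ma :: "(nat \<Rightarrow> bit) \<Rightarrow> nat \<Rightarrow> bit" where "ma x = vec4 (x 3) (x 0 + x 3) (x 1) (x 2)"
definition Lm :: "(nat \<Rightarrow> bit) \<Rightarrow> (nat \<Rightarrow> bit) \<Rightarrow> (nat \<Rightarrow> bit) \<Rightarrow> nat \<Rightarrow> bit" where
  "Lm r0 r1 r2 = ma r0 + ma (ma r1) + ma (ma (ma r2))"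
definition Bx :: "(nat \<Rightarrow> bit) \<Rightarrow> (nat \<Rightarrow> bit) \<Rightarrow> (nat \<Rightarrow> bit) \<Rightarrow> (nat \<Rightarrow> bit) \<Rightarrow> nat \<Rightarrow> bit" where
  "Bx r0 r1 r2 x = smul (x 0) r0 + smul (x 1) r1 + smul (x 2) r2 + smul (x 3) (Lm r0 r1 r2)"

lemma vec4_add: "vec4 a b c d + vec4 a' b' c' d' = vec4 (a+a') (b+b') (c+c') (d+d')"
  by (rule ext) (simp add: vec4_def)
lemma ma_add: "ma (x + y) = ma x + ma y"
  by (simp only: ma_def plus_fun_apply vec4_add add_ac)
lemma ma_smul: "ma (smul a x) = smul a (ma x)"
  by (rule ext) (simp add: ma_def vec4_def smul_def distrib_left del: bit_not_zero_iff bit_not_one_iff)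
lemma ma_vecs [simp]: "ma x \<in> vecs 4" by (simp add: ma_def)
lemma Lm_vecs [simp]: "Lm r0 r1 r2 \<in> vecs 4" by (simp add: Lm_def vecs_add)
lemma Lm_add: "Lm (r0 + r0') (r1 + r1') (r2 + r2') = Lm r0 r1 r2 + Lm r0' r1' r2'"
  by (simp add: Lm_def ma_add add_ac)
lemma Bx_vecs [simp]: "r0 \<in> vecs 4 \<Longrightarrow> r1 \<in> vecs 4 \<Longrightarrow> r2 \<in> vecs 4 \<Longrightarrow> Bx r0 r1 r2 x \<in> vecs 4"
  by (simp add: Bx_def vecs_add)
lemma Bx_addr: "Bx (r0 + r0') (r1 + r1') (r2 + r2') x = Bx r0 r1 r2 x + Bx r0' r1' r2' x"
  by (simp only: Bx_def Lm_add smul_add add_ac)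
lemma Bx_addx: "Bx r0 r1 r2 (x + y) = Bx r0 r1 r2 x + Bx r0 r1 r2 y"
  by (simp only: Bx_def plus_fun_apply smul_add2 add_ac)
lemma Bx_ev: "Bx r0 r1 r2 (ev 0) = r0" "Bx r0 r1 r2 (ev 1) = r1" "Bx r0 r1 r2 (ev (Suc 0)) = r1" "Bx r0 r1 r2 (ev 2) = r2" "Bx r0 r1 r2 (ev 3) = Lm r0 r1 r2"
  by (simp_all add: Bx_def ev_def)

lemma vec4_simps: "vec4 a b c d 0 = a" "vec4 a b c d 1 = b" "vec4 a b c d 2 = c" "vec4 a b c d 3 = d"
  by (simp_all add: vec4_def)

lemma mrd_check: assumes w: "w \<in> vecs 4" "w \<noteq> 0" and f: "f0 \<noteq> 0 \<or> f1 \<noteq> 0 \<or> f2 \<noteq> 0 \<or> f3 \<noteq> 0"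
  shows "Lm (smul f0 w) (smul f1 w) (smul f2 w) \<noteq> smul f3 w"
proof
  have nz: "w 0 \<noteq> 0 \<or> w 1 \<noteq> 0 \<or> w 2 \<noteq> 0 \<or> w 3 \<noteq> 0" using w vecs4_eq[OF w(1) vecs_zero] by auto
  assume eq: "Lm (smul f0 w) (smul f1 w) (smul f2 w) = smul f3 w"
  have "Lm (smul f0 w) (smul f1 w) (smul f2 w) 0 = smul f3 w 0" "Lm (smul f0 w) (smul f1 w) (smul f2 w) 1 = smul f3 w 1"
     "Lm (smul f0 w) (smul f1 w) (smul f2 w) 2 = smul f3 w 2" "Lm (smul f0 w) (smul f1 w) (smul f2 w) 3 = smul f3 w 3"
    using eq by simp_all
  then show False using f nz
    apply (simp only: Lm_def ma_def smul_def plus_fun_apply vec4_simps)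
    apply (cases f0; cases f1; cases f2; cases f3; cases "w 0"; cases "w 1"; cases "w 2"; cases "w 3")
    apply (simp_all only: mult_zero_left mult_1_left add_0_left add_0_right bit_add_self one_neq_zero zero_neq_one simp_thms)
    done
qed



lemma sum0_eq: "(x::nat\<Rightarrow>bit) + y = 0 \<Longrightarrow> y = x"
proof -
  assume "x + y = 0"
  then have "x + (x + y) = x + 0" by simp
  then show "y = x" by simp
qed

lemma Bx_0 [simp]: "Bx r0 r1 r2 0 = 0" by (simp add: Bx_def)

lemma vec_ev: "x \<in> vecs 4 \<Longrightarrow> x = smul (x 0) (ev 0) + smul (x 1) (ev 1) + smul (x 2) (ev 2) + smul (x 3) (ev 3)"
  apply (rule ext)
  apply (rename_tac j)
  apply (case_tac "j < 4")
   apply (auto simp: lt4 smul_def ev_def vecs_def)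
  done

lemma ev_span: "x \<in> vecs 4 \<Longrightarrow> x \<in> span_of [ev 0, ev 1, ev 2, ev 3]"
  apply (subst vec_ev, assumption)
  unfolding span4
  apply (cases "x 0"; cases "x 1"; cases "x 2"; cases "x 3")
  apply simp_all
  done

lemma kill:
  assumes a: "a1 \<in> vecs 4" "a2 \<in> vecs 4" "a3 \<in> vecs 4" and ind: "lin_indep [a1,a2,a3]"
    and d: "d0 \<in> vecs 4" "d1 \<in> vecs 4" "d2 \<in> vecs 4"
    and k: "Bx d0 d1 d2 a1 = 0" "Bx d0 d1 d2 a2 = 0" "Bx d0 d1 d2 a3 = 0"
  shows "d0 = 0 \<and> d1 = 0 \<and> d2 = 0"
proof -
  let ?D = "Bx d0 d1 d2"
  let ?S = "span_of [a1,a2,a3]"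
  have cS: "card ?S = 8" using card_span_indep[OF ind] by simp
  have Sv: "?S \<subseteq> vecs 4" using span3_sub[OF closed_vecs a] .
  have fS: "finite ?S" using finite_subset[OF Sv finite_vecs4] .
  have "\<exists>k<4. ev k \<notin> ?S"
  proof (rule ccontr)
    assume "\<not> (\<exists>k<4. ev k \<notin> ?S)"
    then have "ev 0 \<in> ?S" "ev 1 \<in> ?S" "ev 2 \<in> ?S" "ev 3 \<in> ?S" by auto
    then have "span_of [ev 0, ev 1, ev 2, ev 3] \<subseteq> ?S" using span4_sub[OF closed_span] by blast
    then have "vecs 4 \<subseteq> ?S" using ev_span by blast
    then have "card (vecs 4 :: (nat\<Rightarrow>bit) set) \<le> card ?S" using card_mono[OF fS] by blast
    then show False using cS card_vecs4 by simp
  qed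
  then obtain k where kk: "k < 4" "ev k \<notin> ?S" by blast
  define e where "e = ev k"
  have ne: "s \<in> ?S \<Longrightarrow> s + e \<noteq> 0" for s
    using kk sum0_eq e_def by blast
  have e0: "e \<noteq> 0" using ne[OF span_0] by simp
  have i3: "a1 \<noteq> 0 \<and> a2 \<noteq> 0 \<and> a3 \<noteq> 0 \<and> a1+a2 \<noteq> 0 \<and> a1+a3 \<noteq> 0 \<and> a2+a3 \<noteq> 0 \<and> a1+a2+a3 \<noteq> 0"
    using ind indep3 by blast
  have ind4: "lin_indep [a1,a2,a3,e]"
    unfolding indep4 using i3 e0 ne unfolding span3 by simp
  have sub4: "span_of [a1,a2,a3,e] \<subseteq> vecs 4"
    using span4_sub[OF closed_vecs a] e_def kk by simp
  have "card (span_of [a1,a2,a3,e]) = 16" using card_span_indep[OF ind4] by simp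
  then have eq4: "span_of [a1,a2,a3,e] = vecs 4"
    using card_subset_eq[OF finite_vecs4 sub4] card_vecs4 by simp
  have Dv: "y \<in> vecs 4 \<Longrightarrow> ?D y = 0 \<or> ?D y = ?D e" for y
  proof -
    assume "y \<in> vecs 4"
    then have "y \<in> span_of [a1,a2,a3,e]" using eq4 by simp
    then show ?thesis unfolding span4
      by (elim insertE emptyE) (simp_all add: Bx_addx k)
  qed
  define w where "w = ?D e"
  have dd: "d0 \<in> {0, w}" "d1 \<in> {0, w}" "d2 \<in> {0, w}" "Lm d0 d1 d2 \<in> {0, w}"
    using Dv[of "ev 0"] Dv[of "ev 1"] Dv[of "ev 2"] Dv[of "ev 3"] by (simp_all add: Bx_ev w_def)
  have wk: "w \<in> {d0, d1, d2, Lm d0 d1 d2}"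
    using kk(1) unfolding w_def e_def lt4 by (auto simp: Bx_ev)
  show ?thesis
  proof (cases "w = 0")
    case True then show ?thesis using dd by simp
  next
    case False
    have fx: "v \<in> {0, w} \<Longrightarrow> \<exists>f. v = smul f w" for v
      by (auto intro: exI[of _ 0] exI[of _ 1])
    obtain f0 f1 f2 f3 where f: "d0 = smul f0 w" "d1 = smul f1 w" "d2 = smul f2 w" "Lm d0 d1 d2 = smul f3 w"
      using fx[OF dd(1)] fx[OF dd(2)] fx[OF dd(3)] fx[OF dd(4)] by metis
    have fnz: "f0 \<noteq> 0 \<or> f1 \<noteq> 0 \<or> f2 \<noteq> 0 \<or> f3 \<noteq> 0"
    proof (rule ccontr)
      assume "\<not> ?thesis"
      then have "f0 = 0" "f1 = 0" "f2 = 0" "f3 = 0" by auto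
      then show False using wk f False by auto
    qed
    have wv: "w \<in> vecs 4" unfolding w_def using d by simp
    have "Lm (smul f0 w) (smul f1 w) (smul f2 w) \<noteq> smul f3 w" using mrd_check[OF wv False fnz] .
    then show ?thesis using f by simp
  qed
qed

lemma T0:
  assumes a: "a1 \<in> vecs 4" "a2 \<in> vecs 4" "a3 \<in> vecs 4" and ind: "lin_indep [a1,a2,a3]"
    and y: "y1 \<in> vecs 4" "y2 \<in> vecs 4" "y3 \<in> vecs 4"
  shows "\<exists>r0 r1 r2. r0 \<in> vecs 4 \<and> r1 \<in> vecs 4 \<and> r2 \<in> vecs 4 \<and>
     Bx r0 r1 r2 a1 = y1 \<and> Bx r0 r1 r2 a2 = y2 \<and> Bx r0 r1 r2 a3 = y3"
proof -
  let ?A = "(vecs 4 :: (nat\<Rightarrow>bit) set) \<times> (vecs 4 :: (nat\<Rightarrow>bit) set) \<times> (vecs 4 :: (nat\<Rightarrow>bit) set)"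
  define \<Phi> where "\<Phi> = (\<lambda>(r0,r1,r2). (Bx r0 r1 r2 a1, Bx r0 r1 r2 a2, Bx r0 r1 r2 a3))"
  have fA: "finite ?A" using finite_vecs4 by (blast intro: finite_cartesian_product)
  have sA: "\<Phi> ` ?A \<subseteq> ?A"
  proof
    fix q assume "q \<in> \<Phi> ` ?A"
    then obtain r0 r1 r2 where r: "r0 \<in> vecs 4" "r1 \<in> vecs 4" "r2 \<in> vecs 4" and q: "q = \<Phi> (r0, r1, r2)" by auto
    show "q \<in> ?A" unfolding q \<Phi>_def using Bx_vecs[OF r] by simp
  qed
  have iA: "inj_on \<Phi> ?A"
  proof (rule inj_onI)
    fix p p' assume pA: "p \<in> ?A" "p' \<in> ?A" and eqp: "\<Phi> p = \<Phi> p'"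
    obtain r0 r1 r2 where pe: "p = (r0, r1, r2)" by (cases p) auto
    obtain r0' r1' r2' where pe': "p' = (r0', r1', r2')" by (cases p') auto
    have r: "r0 \<in> vecs 4" "r1 \<in> vecs 4" "r2 \<in> vecs 4" "r0' \<in> vecs 4" "r1' \<in> vecs 4" "r2' \<in> vecs 4"
      using pA unfolding pe pe' by auto
    have eq: "\<Phi> (r0, r1, r2) = \<Phi> (r0', r1', r2')" using eqp unfolding pe pe' .
    have e3: "Bx r0 r1 r2 a1 = Bx r0' r1' r2' a1" "Bx r0 r1 r2 a2 = Bx r0' r1' r2' a2" "Bx r0 r1 r2 a3 = Bx r0' r1' r2' a3"
      using eq unfolding \<Phi>_def by simp_all
    have h: "Bx (r0 + r0') (r1 + r1') (r2 + r2') a1 = 0" "Bx (r0 + r0') (r1 + r1') (r2 + r2') a2 = 0"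
         "Bx (r0 + r0') (r1 + r1') (r2 + r2') a3 = 0"
      unfolding Bx_addr e3 by (rule vadd_self)+
    have "r0 + r0' = 0 \<and> r1 + r1' = 0 \<and> r2 + r2' = 0"
      using kill[OF a ind vecs_add[OF r(1) r(4)] vecs_add[OF r(2) r(5)] vecs_add[OF r(3) r(6)] h] .
    then have "r0' = r0" "r1' = r1" "r2' = r2" using sum0_eq by blast+
    then show "p = p'" unfolding pe pe' by simp
  qed
  have "\<Phi> ` ?A = ?A" using endo_inj_surj[OF fA sA iA] .
  then have "(y1, y2, y3) \<in> \<Phi> ` ?A" using y by simp
  then obtain r0 r1 r2 where r: "r0 \<in> vecs 4" "r1 \<in> vecs 4" "r2 \<in> vecs 4" and q: "(y1, y2, y3) = \<Phi> (r0, r1, r2)" by auto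
  have "Bx r0 r1 r2 a1 = y1 \<and> Bx r0 r1 r2 a2 = y2 \<and> Bx r0 r1 r2 a3 = y3" using q unfolding \<Phi>_def by simp
  then show ?thesis using r by blast
qed



definition tblL :: "(nat\<times>nat\<times>nat\<times>nat) list list" where
"tblL = [[(4,10,1,2), (6,11,1,2), (5,9,1,2), (7,8,1,2), (1,2,4,8)], [(7,9,1,2), (5,10,1,2), (2,4,1,8), (3,8,1,4), (1,12,2,4)], [(5,11,1,2), (3,9,1,4), (1,6,2,8), (4,8,1,2), (2,13,1,4)], [(6,8,1,2), (4,9,1,2), (1,10,2,4), (3,12,1,4), (2,5,1,8)], [(2,8,1,4), (1,4,2,8), (7,11,1,2), (6,9,1,2), (3,13,1,4)], [(1,8,2,4), (4,11,1,2), (2,12,1,4), (3,5,1,8), (7,10,1,2)], [(2,9,1,4), (3,4,1,8), (5,8,1,2), (6,10,1,2), (1,14,2,4)]]"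
definition tP1 :: "nat \<Rightarrow> nat \<Rightarrow> nat" where "tP1 c s = fst (tblL ! c ! s)"
definition tP2 :: "nat \<Rightarrow> nat \<Rightarrow> nat" where "tP2 c s = fst (snd (tblL ! c ! s))"
definition tQ1 :: "nat \<Rightarrow> nat \<Rightarrow> nat" where "tQ1 c s = fst (snd (snd (tblL ! c ! s)))"
definition tQ2 :: "nat \<Rightarrow> nat \<Rightarrow> nat" where "tQ2 c s = snd (snd (snd (tblL ! c ! s)))"
definition inL :: "nat \<Rightarrow> nat \<Rightarrow> nat \<Rightarrow> bool" where
  "inL c s n = (n = tP1 c s \<or> n = tP2 c s \<or> n = xor (tP1 c s) (tP2 c s))"
definition qsel :: "nat \<Rightarrow> nat \<Rightarrow> nat \<Rightarrow> nat" where
  "qsel c s i = [0, tQ1 c s, tQ2 c s, xor (tQ1 c s) (tQ2 c s)] ! i"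
lemma tvals [simp]:
  "tP1 0 0 = 4" "tP2 0 0 = 10" "tQ1 0 0 = 1" "tQ2 0 0 = 2"
  "tP1 0 1 = 6" "tP2 0 1 = 11" "tQ1 0 1 = 1" "tQ2 0 1 = 2"
  "tP1 0 (Suc 0) = 6" "tP2 0 (Suc 0) = 11" "tQ1 0 (Suc 0) = 1" "tQ2 0 (Suc 0) = 2"
  "tP1 0 2 = 5" "tP2 0 2 = 9" "tQ1 0 2 = 1" "tQ2 0 2 = 2"
  "tP1 0 3 = 7" "tP2 0 3 = 8" "tQ1 0 3 = 1" "tQ2 0 3 = 2"
  "tP1 0 4 = 1" "tP2 0 4 = 2" "tQ1 0 4 = 4" "tQ2 0 4 = 8"
  "tP1 1 0 = 7" "tP2 1 0 = 9" "tQ1 1 0 = 1" "tQ2 1 0 = 2"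
  "tP1 (Suc 0) 0 = 7" "tP2 (Suc 0) 0 = 9" "tQ1 (Suc 0) 0 = 1" "tQ2 (Suc 0) 0 = 2"
  "tP1 1 1 = 5" "tP2 1 1 = 10" "tQ1 1 1 = 1" "tQ2 1 1 = 2"
  "tP1 1 (Suc 0) = 5" "tP2 1 (Suc 0) = 10" "tQ1 1 (Suc 0) = 1" "tQ2 1 (Suc 0) = 2"
  "tP1 (Suc 0) 1 = 5" "tP2 (Suc 0) 1 = 10" "tQ1 (Suc 0) 1 = 1" "tQ2 (Suc 0) 1 = 2"
  "tP1 (Suc 0) (Suc 0) = 5" "tP2 (Suc 0) (Suc 0) = 10" "tQ1 (Suc 0) (Suc 0) = 1" "tQ2 (Suc 0) (Suc 0) = 2"
  "tP1 1 2 = 2" "tP2 1 2 = 4" "tQ1 1 2 = 1" "tQ2 1 2 = 8"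
  "tP1 (Suc 0) 2 = 2" "tP2 (Suc 0) 2 = 4" "tQ1 (Suc 0) 2 = 1" "tQ2 (Suc 0) 2 = 8"
  "tP1 1 3 = 3" "tP2 1 3 = 8" "tQ1 1 3 = 1" "tQ2 1 3 = 4"
  "tP1 (Suc 0) 3 = 3" "tP2 (Suc 0) 3 = 8" "tQ1 (Suc 0) 3 = 1" "tQ2 (Suc 0) 3 = 4"
  "tP1 1 4 = 1" "tP2 1 4 = 12" "tQ1 1 4 = 2" "tQ2 1 4 = 4"
  "tP1 (Suc 0) 4 = 1" "tP2 (Suc 0) 4 = 12" "tQ1 (Suc 0) 4 = 2" "tQ2 (Suc 0) 4 = 4"
  "tP1 2 0 = 5" "tP2 2 0 = 11" "tQ1 2 0 = 1" "tQ2 2 0 = 2"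
  "tP1 2 1 = 3" "tP2 2 1 = 9" "tQ1 2 1 = 1" "tQ2 2 1 = 4"
  "tP1 2 (Suc 0) = 3" "tP2 2 (Suc 0) = 9" "tQ1 2 (Suc 0) = 1" "tQ2 2 (Suc 0) = 4"
  "tP1 2 2 = 1" "tP2 2 2 = 6" "tQ1 2 2 = 2" "tQ2 2 2 = 8"
  "tP1 2 3 = 4" "tP2 2 3 = 8" "tQ1 2 3 = 1" "tQ2 2 3 = 2"
  "tP1 2 4 = 2" "tP2 2 4 = 13" "tQ1 2 4 = 1" "tQ2 2 4 = 4"
  "tP1 3 0 = 6" "tP2 3 0 = 8" "tQ1 3 0 = 1" "tQ2 3 0 = 2"
  "tP1 3 1 = 4" "tP2 3 1 = 9" "tQ1 3 1 = 1" "tQ2 3 1 = 2"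
  "tP1 3 (Suc 0) = 4" "tP2 3 (Suc 0) = 9" "tQ1 3 (Suc 0) = 1" "tQ2 3 (Suc 0) = 2"
  "tP1 3 2 = 1" "tP2 3 2 = 10" "tQ1 3 2 = 2" "tQ2 3 2 = 4"
  "tP1 3 3 = 3" "tP2 3 3 = 12" "tQ1 3 3 = 1" "tQ2 3 3 = 4"
  "tP1 3 4 = 2" "tP2 3 4 = 5" "tQ1 3 4 = 1" "tQ2 3 4 = 8"
  "tP1 4 0 = 2" "tP2 4 0 = 8" "tQ1 4 0 = 1" "tQ2 4 0 = 4"
  "tP1 4 1 = 1" "tP2 4 1 = 4" "tQ1 4 1 = 2" "tQ2 4 1 = 8"
  "tP1 4 (Suc 0) = 1" "tP2 4 (Suc 0) = 4" "tQ1 4 (Suc 0) = 2" "tQ2 4 (Suc 0) = 8"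
  "tP1 4 2 = 7" "tP2 4 2 = 11" "tQ1 4 2 = 1" "tQ2 4 2 = 2"
  "tP1 4 3 = 6" "tP2 4 3 = 9" "tQ1 4 3 = 1" "tQ2 4 3 = 2"
  "tP1 4 4 = 3" "tP2 4 4 = 13" "tQ1 4 4 = 1" "tQ2 4 4 = 4"
  "tP1 5 0 = 1" "tP2 5 0 = 8" "tQ1 5 0 = 2" "tQ2 5 0 = 4"
  "tP1 5 1 = 4" "tP2 5 1 = 11" "tQ1 5 1 = 1" "tQ2 5 1 = 2"
  "tP1 5 (Suc 0) = 4" "tP2 5 (Suc 0) = 11" "tQ1 5 (Suc 0) = 1" "tQ2 5 (Suc 0) = 2"
  "tP1 5 2 = 2" "tP2 5 2 = 12" "tQ1 5 2 = 1" "tQ2 5 2 = 4"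
  "tP1 5 3 = 3" "tP2 5 3 = 5" "tQ1 5 3 = 1" "tQ2 5 3 = 8"
  "tP1 5 4 = 7" "tP2 5 4 = 10" "tQ1 5 4 = 1" "tQ2 5 4 = 2"
  "tP1 6 0 = 2" "tP2 6 0 = 9" "tQ1 6 0 = 1" "tQ2 6 0 = 4"
  "tP1 6 1 = 3" "tP2 6 1 = 4" "tQ1 6 1 = 1" "tQ2 6 1 = 8"
  "tP1 6 (Suc 0) = 3" "tP2 6 (Suc 0) = 4" "tQ1 6 (Suc 0) = 1" "tQ2 6 (Suc 0) = 8"
  "tP1 6 2 = 5" "tP2 6 2 = 8" "tQ1 6 2 = 1" "tQ2 6 2 = 2"
  "tP1 6 3 = 6" "tP2 6 3 = 10" "tQ1 6 3 = 1" "tQ2 6 3 = 2"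
  "tP1 6 4 = 1" "tP2 6 4 = 14" "tQ1 6 4 = 2" "tQ2 6 4 = 4"
  by (simp_all add: tP1_def tP2_def tQ1_def tQ2_def tblL_def)

definition "c7 = [0,1,2,3,4,5,6::nat]"
definition "s5 = [0,1,2,3,4::nat]"
definition "r15 = [1,2,3,4,5,6,7,8,9,10,11,12,13,14,15::nat]"
definition "r16 = [0,1,2,3,4,5,6,7,8,9,10,11,12,13,14,15::nat]"
definition "i4 = [0,1,2,3::nat]"

lemma ck2: "list_all (\<lambda>c. list_all (\<lambda>n. list_ex (\<lambda>s. inL c s n) s5) r15) c7"
  by (simp add: c7_def s5_def r15_def inL_def)
lemma ckc: "list_all (\<lambda>c. list_all (\<lambda>s. list_all (\<lambda>n. list_ex (\<lambda>i. xor n (qsel c s i) = 0 \<or> inL c s (xor n (qsel c s i))) i4) r16) s5) c7"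
  by (simp add: c7_def s5_def r16_def i4_def inL_def qsel_def)
lemma ck3: "list_all (\<lambda>m. list_all (\<lambda>n. m = n \<or> list_ex (\<lambda>c. list_ex (\<lambda>s. inL c s m \<and> inL c s n) s5) c7) r15) r15"
  by (simp add: c7_def s5_def r15_def inL_def)

lemma ckt: "list_all (\<lambda>c. list_all (\<lambda>s. tP1 c s \<noteq> 0 \<and> tP2 c s \<noteq> 0 \<and> tP1 c s \<noteq> tP2 c s \<and> tP1 c s < 16 \<and> tP2 c s < 16 \<and> list_all (\<lambda>i. qsel c s i < 16) i4) s5) c7"
  by (simp add: c7_def s5_def i4_def qsel_def)
lemma ckq: "list_all (\<lambda>c. list_all (\<lambda>s. list_all (\<lambda>i. list_all (\<lambda>j. list_ex (\<lambda>k. qsel c s k = xor (qsel c s i) (qsel c s j)) i4) i4) i4) s5) c7"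
  by (simp add: c7_def s5_def i4_def qsel_def)

lemma set_c7: "set c7 = {..<7}" by (auto simp: c7_def)
lemma set_s5: "set s5 = {..<5}" by (auto simp: s5_def)
lemma set_i4: "set i4 = {..<4}" by (auto simp: i4_def)
lemma set_r16: "set r16 = {..<16}" by (auto simp: r16_def) presburger
lemma set_r15: "set r15 = {0<..<16}" by (auto simp: r15_def) presburger



lemma F_ck2: assumes "c < 7" "0 < n" "n < 16" shows "\<exists>s<5. inL c s n"
proof -
  have "c \<in> {..<7}" "n \<in> {0<..<16}" using assms by auto
  then obtain s where "s \<in> {..<5}" "inL c s n" using ck2 unfolding list_all_iff list_ex_iff set_c7 set_s5 set_r15 by blast
  then show ?thesis by auto
qed
lemma F_ck3: assumes "0 < m" "m < 16" "0 < n" "n < 16" "m \<noteq> n" shows "\<exists>c<7. \<exists>s<5. inL c s m \<and> inL c s n"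
proof -
  have "m \<in> {0<..<16}" "n \<in> {0<..<16}" using assms by auto
  then obtain c s where "c \<in> {..<7}" "s \<in> {..<5}" "inL c s m \<and> inL c s n"
    using ck3 assms(5) unfolding list_all_iff list_ex_iff set_c7 set_s5 set_r15 by blast
  then show ?thesis by auto
qed
lemma F_ckc: assumes "c < 7" "s < 5" "n < 16" shows "\<exists>i<4. xor n (qsel c s i) = 0 \<or> inL c s (xor n (qsel c s i))"
proof -
  have "c \<in> {..<7}" "s \<in> {..<5}" "n \<in> {..<16}" using assms by auto
  then obtain i where "i \<in> {..<4}" "xor n (qsel c s i) = 0 \<or> inL c s (xor n (qsel c s i))"
    using ckc unfolding list_all_iff list_ex_iff set_c7 set_s5 set_r16 set_i4 by blast
  then show ?thesis by auto
qed
lemma F_ckq: assumes "c < 7" "s < 5" "i < 4" "j < 4" shows "\<exists>k<4. qsel c s k = xor (qsel c s i) (qsel c s j)"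
proof -
  have "c \<in> {..<7}" "s \<in> {..<5}" "i \<in> {..<4}" "j \<in> {..<4}" using assms by auto
  then obtain k where "k \<in> {..<4}" "qsel c s k = xor (qsel c s i) (qsel c s j)"
    using ckq unfolding list_all_iff list_ex_iff set_c7 set_s5 set_i4 by blast
  then show ?thesis by auto
qed
lemma F_ckt: assumes "c < 7" "s < 5" shows "tP1 c s \<noteq> 0 \<and> tP2 c s \<noteq> 0 \<and> tP1 c s \<noteq> tP2 c s \<and> tP1 c s < 16 \<and> tP2 c s < 16"
proof -
  have "c \<in> {..<7}" "s \<in> {..<5}" using assms by auto
  then show ?thesis using ckt unfolding list_all_iff set_c7 set_s5 by blast
qed
lemma qsel0: "qsel c s 0 = 0" by (simp add: qsel_def)

definition VP1 :: "nat \<Rightarrow> nat \<Rightarrow> nat \<Rightarrow> bit" where "VP1 c s = vc (tP1 c s)"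
definition VP2 :: "nat \<Rightarrow> nat \<Rightarrow> nat \<Rightarrow> bit" where "VP2 c s = vc (tP2 c s)"
definition VQ :: "nat \<Rightarrow> nat \<Rightarrow> nat \<Rightarrow> nat \<Rightarrow> bit" where "VQ c s i = vc (qsel c s i)"
definition Lset :: "nat \<Rightarrow> nat \<Rightarrow> (nat \<Rightarrow> bit) set" where "Lset c s = {VP1 c s, VP2 c s, VP1 c s + VP2 c s}"
definition Eset :: "nat \<Rightarrow> nat \<Rightarrow> (nat \<Rightarrow> bit) set" where "Eset c s = {0, VP1 c s, VP2 c s, VP1 c s + VP2 c s}"

lemma VQ0: "VQ c s 0 = 0" by (simp add: VQ_def qsel0)
lemma Lset_Eset: "x \<in> Lset c s \<Longrightarrow> x \<in> Eset c s" by (auto simp: Lset_def Eset_def)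

lemma inL_vc: "inL c s n \<Longrightarrow> vc n \<in> Lset c s"
  unfolding inL_def Lset_def VP1_def VP2_def by (auto simp: vc_add)

lemma code_of: "x \<in> vecs 4 \<Longrightarrow> \<exists>n<16. x = vc n" by (rule vc_surj)

lemma lines_cover: assumes "m \<in> vecs 4" "n \<in> vecs 4" "m \<noteq> 0" "n \<noteq> 0" "m + n \<noteq> 0"
  shows "\<exists>c<7. \<exists>s<5. m \<in> Lset c s \<and> n \<in> Lset c s"
proof -
  obtain a where a: "a < 16" "m = vc a" using code_of[OF assms(1)] by blast
  obtain b where b: "b < 16" "n = vc b" using code_of[OF assms(2)] by blast
  have "a \<noteq> 0" "b \<noteq> 0" using assms a b by auto
  moreover have "a \<noteq> b" using assms(5) a b by auto
  ultimately obtain c s where "c < 7" "s < 5" "inL c s a" "inL c s b" using F_ck3 a b by blast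
  then show ?thesis using inL_vc a b by blast
qed

lemma spread_cover: assumes "c < 7" "m \<in> vecs 4" "m \<noteq> 0" shows "\<exists>s<5. m \<in> Lset c s"
proof -
  obtain a where a: "a < 16" "m = vc a" using code_of[OF assms(2)] by blast
  have "a \<noteq> 0" using assms a by auto
  then obtain s where "s < 5" "inL c s a" using F_ck2[OF assms(1)] a by blast
  then show ?thesis using inL_vc a by blast
qed

lemma decomp: assumes "c < 7" "s < 5" "y \<in> vecs 4" shows "\<exists>i<4. \<exists>t\<in>Eset c s. y = VQ c s i + t"
proof -
  obtain a where a: "a < 16" "y = vc a" using code_of[OF assms(3)] by blast
  obtain i where i: "i < 4" "xor a (qsel c s i) = 0 \<or> inL c s (xor a (qsel c s i))" using F_ckc[OF assms(1,2) a(1)] by blast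
  have t: "vc (xor a (qsel c s i)) \<in> Eset c s" using i(2) inL_vc[THEN Lset_Eset] by (auto simp: Eset_def)
  have "vc (xor a (qsel c s i)) = vc a + VQ c s i" by (simp add: VQ_def vc_add)
  then have "y = VQ c s i + vc (xor a (qsel c s i))" using a by (simp add: add_ac)
  then show ?thesis using i(1) t by blast
qed

lemma qsel_closed: assumes "c < 7" "s < 5" "i < 4" "j < 4" shows "\<exists>k<4. VQ c s k = VQ c s i + VQ c s j"
  using F_ckq[OF assms] by (auto simp: VQ_def vc_add)

lemma VP_facts: assumes "c < 7" "s < 5"
  shows "VP1 c s \<in> vecs 4" "VP2 c s \<in> vecs 4" "VP1 c s \<noteq> 0" "VP2 c s \<noteq> 0" "VP1 c s + VP2 c s \<noteq> 0"
proof -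
  have f: "tP1 c s \<noteq> 0" "tP2 c s \<noteq> 0" "tP1 c s \<noteq> tP2 c s" "tP1 c s < 16" "tP2 c s < 16" using F_ckt[OF assms] by auto
  show "VP1 c s \<in> vecs 4" "VP2 c s \<in> vecs 4" by (simp_all add: VP1_def VP2_def)
  show "VP1 c s \<noteq> 0" using vc_eq_iff[OF f(4), of 0] f(1) by (simp add: VP1_def)
  show "VP2 c s \<noteq> 0" using vc_eq_iff[OF f(5), of 0] f(2) by (simp add: VP2_def)
  show "VP1 c s + VP2 c s \<noteq> 0"
  proof
    assume "VP1 c s + VP2 c s = 0"
    then have "VP2 c s = VP1 c s" by (rule sum0_eq)
    then show False using vc_eq_iff[OF f(5) f(4)] f(3) by (simp add: VP1_def VP2_def)
  qed
qed

lemma VQ_vecs [simp]: "VQ c s i \<in> vecs 4" by (simp add: VQ_def)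

definition blkW :: "(nat \<Rightarrow> bit) set" where
  "blkW = span_of [pair 0 (ev 0), pair 0 (ev 1), pair 0 (ev 2), pair 0 (ev 3)]"
definition basB :: "(nat \<Rightarrow> bit) \<Rightarrow> (nat \<Rightarrow> bit) \<Rightarrow> (nat \<Rightarrow> bit) \<Rightarrow> (nat \<Rightarrow> bit) list" where
  "basB r0 r1 r2 = [pair (ev 0) r0, pair (ev 1) r1, pair (ev 2) r2, pair (ev 3) (Lm r0 r1 r2)]"
definition bas2 :: "nat \<Rightarrow> nat \<Rightarrow> nat \<Rightarrow> nat \<Rightarrow> nat \<Rightarrow> (nat \<Rightarrow> bit) list" where
  "bas2 c s' s i j = [pair (VP1 c s') (VQ c s i), pair (VP2 c s') (VQ c s j), pair 0 (VP1 c s), pair 0 (VP2 c s)]"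

definition Fam :: "(nat \<Rightarrow> bit) set set" where
  "Fam = insert blkW ((\<lambda>(r0,r1,r2). span_of (basB r0 r1 r2)) ` ((vecs 4 :: (nat\<Rightarrow>bit) set) \<times> (vecs 4 :: (nat\<Rightarrow>bit) set) \<times> (vecs 4 :: (nat\<Rightarrow>bit) set))
     \<union> (\<lambda>(c,s',s,i,j). span_of (bas2 c s' s i j)) ` ({..<7} \<times> {..<5} \<times> {..<5} \<times> {..<4} \<times> {..<4}))"

definition covd :: "(nat \<Rightarrow> bit) \<Rightarrow> (nat \<Rightarrow> bit) \<Rightarrow> (nat \<Rightarrow> bit) \<Rightarrow> bool" where
  "covd v1 v2 v3 \<longleftrightarrow> (\<exists>K\<in>Fam. v1 \<in> K \<and> v2 \<in> K \<and> v3 \<in> K)"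

lemma covdI: "K \<in> Fam \<Longrightarrow> v1 \<in> K \<Longrightarrow> v2 \<in> K \<Longrightarrow> v3 \<in> K \<Longrightarrow> covd v1 v2 v3"
  unfolding covd_def by blast

lemma blkW_in: "blkW \<in> Fam" unfolding Fam_def by simp
lemma blkB_in: "r0 \<in> vecs 4 \<Longrightarrow> r1 \<in> vecs 4 \<Longrightarrow> r2 \<in> vecs 4 \<Longrightarrow> span_of (basB r0 r1 r2) \<in> Fam"
  unfolding Fam_def by (intro insertI2 UnI1 image_eqI[where x="(r0,r1,r2)"]) auto
lemma blk2_in: "c < 7 \<Longrightarrow> s' < 5 \<Longrightarrow> s < 5 \<Longrightarrow> i < 4 \<Longrightarrow> j < 4 \<Longrightarrow> span_of (bas2 c s' s i j) \<in> Fam"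
  unfolding Fam_def by (intro insertI2 UnI2 image_eqI[where x="(c,s',s,i,j)"]) auto

lemma Fam_closed: "K \<in> Fam \<Longrightarrow> closed K"
  unfolding Fam_def blkW_def using closed_span by auto

lemma pair_smul: "smul a (pair x y) = pair (smul a x) (smul a y)"
  by (rule ext) (simp add: pair_def smul_def)

lemma smul_span4: "smul a u + smul b v + smul c w + smul d x \<in> span_of [u,v,w,x::nat\<Rightarrow>bit]"
  unfolding span4 by (cases a; cases b; cases c; cases d) simp_all

lemma memW: assumes "y \<in> vecs 4" shows "pair 0 y \<in> blkW"
proof -
  have "pair 0 y = smul (y 0) (pair 0 (ev 0)) + smul (y 1) (pair 0 (ev 1)) + smul (y 2) (pair 0 (ev 2)) + smul (y 3) (pair 0 (ev 3))"
    by (simp only: pair_smul smul_z pair_add add_0_left vec_ev[OF assms, symmetric])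
  then show ?thesis unfolding blkW_def using smul_span4 by metis
qed

lemma memB: assumes "x \<in> vecs 4" shows "pair x (Bx r0 r1 r2 x) \<in> span_of (basB r0 r1 r2)"
proof -
  have "pair x (Bx r0 r1 r2 x) = smul (x 0) (pair (ev 0) r0) + smul (x 1) (pair (ev 1) r1) + smul (x 2) (pair (ev 2) r2) + smul (x 3) (pair (ev 3) (Lm r0 r1 r2))"
    by (simp only: pair_smul pair_add Bx_def vec_ev[OF assms, symmetric])
  then show ?thesis unfolding basB_def using smul_span4 by metis
qed

lemma closed_add: "closed K \<Longrightarrow> a \<in> K \<Longrightarrow> b \<in> K \<Longrightarrow> a + b \<in> K" unfolding closed_def by blast
lemma closed_0: "closed K \<Longrightarrow> 0 \<in> K" unfolding closed_def by blast

lemma mem2: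
  assumes m: "(m = P1 \<and> z = U) \<or> (m = P2 \<and> z = W) \<or> (m = P1 + P2 \<and> z = U + W)"
    and t: "t \<in> {0, E1, E2, E1 + E2}"
  shows "pair m (z + t) \<in> span_of [pair P1 U, pair P2 W, pair 0 E1, pair 0 E2]" (is "_ \<in> ?K")
proof -
  have cK: "closed ?K" by (rule closed_span)
  have b: "pair P1 U \<in> ?K" "pair P2 W \<in> ?K" "pair 0 E1 \<in> ?K" "pair 0 E2 \<in> ?K" unfolding span4 by simp_all
  have mz: "pair m z \<in> ?K"
    using m b closed_add[OF cK b(1) b(2)] by (auto simp: pair_add)
  have "pair 0 t \<in> ?K"
    using t b closed_add[OF cK b(3) b(4)] closed_0[OF cK] by (auto simp: pair_add pair_0)
  then have "pair m z + pair 0 t \<in> ?K" using closed_add[OF cK mz] by blast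
  then show ?thesis by (simp add: pair_add)
qed

lemma mem2z:
  assumes t: "t \<in> {0, E1, E2, E1 + E2}"
  shows "pair 0 t \<in> span_of [pair P1 U, pair P2 W, pair 0 E1, pair 0 E2]" (is "_ \<in> ?K")
proof -
  have cK: "closed ?K" by (rule closed_span)
  have b: "pair 0 E1 \<in> ?K" "pair 0 E2 \<in> ?K" unfolding span4 by simp_all
  show ?thesis
    using t b closed_add[OF cK b(1) b(2)] closed_0[OF cK] by (auto simp: pair_add pair_0)
qed

lemma blk2_memI:
  assumes "y = z + t" "t \<in> Eset c s"
    "(m = VP1 c s' \<and> z = VQ c s iu) \<or> (m = VP2 c s' \<and> z = VQ c s iw) \<or> (m = VP1 c s' + VP2 c s' \<and> z = VQ c s iu + VQ c s iw)"
  shows "pair m y \<in> span_of (bas2 c s' s iu iw)"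
  unfolding bas2_def assms(1) by (rule mem2[OF assms(3)]) (use assms(2) in \<open>simp add: Eset_def\<close>)

lemma blk2_mem0: "t \<in> Eset c s \<Longrightarrow> pair 0 t \<in> span_of (bas2 c s' s iu iw)"
  unfolding bas2_def by (rule mem2z) (simp add: Eset_def)



lemma T3: assumes "v1 \<in> vecs 8" "v2 \<in> vecs 8" "v3 \<in> vecs 8" "xp v1 = 0" "xp v2 = 0" "xp v3 = 0"
  shows "covd v1 v2 v3"
proof -
  have "v1 = pair 0 (yp v1)" "v2 = pair 0 (yp v2)" "v3 = pair 0 (yp v3)"
    using vecs8_pair assms by metis+
  then show ?thesis using covdI[OF blkW_in] memW[OF yp_vecs] by metis
qed

lemma T2: assumes v: "a \<in> vecs 4" "y \<in> vecs 4" "d1 \<in> vecs 4" "d2 \<in> vecs 4"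
    and nz: "a \<noteq> 0" "d1 \<noteq> 0" "d2 \<noteq> 0" "d1 + d2 \<noteq> 0"
  shows "covd (pair a y) (pair 0 d1) (pair 0 d2)"
proof -
  obtain c s where cs: "c < 7" "s < 5" "d1 \<in> Lset c s" "d2 \<in> Lset c s"
    using lines_cover[OF v(3,4) nz(2-4)] by blast
  obtain s' where s': "s' < 5" "a \<in> Lset c s'" using spread_cover[OF cs(1) v(1) nz(1)] by blast
  obtain i t where it: "i < 4" "t \<in> Eset c s" "y = VQ c s i + t" using decomp[OF cs(1,2) v(2)] by blast
  have dm: "pair 0 d1 \<in> span_of (bas2 c s' s iu iw)" "pair 0 d2 \<in> span_of (bas2 c s' s iu iw)" for iu iw
    using blk2_mem0 Lset_Eset cs by blast+
  have z4: "(0::nat) < 4" by simp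
  have "a = VP1 c s' \<or> a = VP2 c s' \<or> a = VP1 c s' + VP2 c s'" using s'(2) by (simp add: Lset_def)
  then show ?thesis
  proof (elim disjE)
    assume a: "a = VP1 c s'"
    have "pair a y \<in> span_of (bas2 c s' s i 0)" by (rule blk2_memI[OF it(3) it(2)]) (simp add: a)
    then show ?thesis by (rule covdI[OF blk2_in[OF cs(1) s'(1) cs(2) it(1) z4] _ dm])
  next
    assume a: "a = VP2 c s'"
    have "pair a y \<in> span_of (bas2 c s' s 0 i)" by (rule blk2_memI[OF it(3) it(2)]) (simp add: a)
    then show ?thesis by (rule covdI[OF blk2_in[OF cs(1) s'(1) cs(2) z4 it(1)] _ dm])
  next
    assume a: "a = VP1 c s' + VP2 c s'"
    have "pair a y \<in> span_of (bas2 c s' s i 0)" by (rule blk2_memI[OF it(3) it(2)]) (simp add: a VQ0)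
    then show ?thesis by (rule covdI[OF blk2_in[OF cs(1) s'(1) cs(2) it(1) z4] _ dm])
  qed
qed

lemma T1case: assumes "c < 7" "s' < 5" "s < 5" "iu < 4" "iw < 4" "t1 \<in> Eset c s" "t2 \<in> Eset c s" "p \<in> Eset c s"
  "(m1 = VP1 c s' \<and> z1 = VQ c s iu) \<or> (m1 = VP2 c s' \<and> z1 = VQ c s iw) \<or> (m1 = VP1 c s' + VP2 c s' \<and> z1 = VQ c s iu + VQ c s iw)"
  "(m2 = VP1 c s' \<and> z2 = VQ c s iu) \<or> (m2 = VP2 c s' \<and> z2 = VQ c s iw) \<or> (m2 = VP1 c s' + VP2 c s' \<and> z2 = VQ c s iu + VQ c s iw)"
  shows "covd (pair m1 (z1 + t1)) (pair m2 (z2 + t2)) (pair 0 p)"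
  by (rule covdI[OF blk2_in[OF assms(1-5)] blk2_memI[OF refl assms(6) assms(9)] blk2_memI[OF refl assms(7) assms(10)] blk2_mem0[OF assms(8)]])

lemma T1: assumes v: "a1 \<in> vecs 4" "a2 \<in> vecs 4" "y1 \<in> vecs 4" "y2 \<in> vecs 4" "p \<in> vecs 4"
    and nz: "a1 \<noteq> 0" "a2 \<noteq> 0" "a1 + a2 \<noteq> 0" "p \<noteq> 0"
  shows "covd (pair a1 y1) (pair a2 y2) (pair 0 p)"
proof -
  obtain c s' where cs: "c < 7" "s' < 5" "a1 \<in> Lset c s'" "a2 \<in> Lset c s'"
    using lines_cover[OF v(1,2) nz(1-3)] by blast
  obtain s where s: "s < 5" "p \<in> Lset c s" using spread_cover[OF cs(1) v(5) nz(4)] by blast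
  have pE: "p \<in> Eset c s" using s Lset_Eset by blast
  obtain i1 t1 where i1: "i1 < 4" "t1 \<in> Eset c s" "y1 = VQ c s i1 + t1" using decomp[OF cs(1) s(1) v(3)] by blast
  obtain i2 t2 where i2: "i2 < 4" "t2 \<in> Eset c s" "y2 = VQ c s i2 + t2" using decomp[OF cs(1) s(1) v(4)] by blast
  obtain i3 where i3: "i3 < 4" "VQ c s i3 = VQ c s i1 + VQ c s i2" using qsel_closed[OF cs(1) s(1) i1(1) i2(1)] by blast
  have ne: "a1 \<noteq> a2" using nz(3) by auto
  have A1: "a1 = VP1 c s' \<or> a1 = VP2 c s' \<or> a1 = VP1 c s' + VP2 c s'" using cs(3) by (simp add: Lset_def)
  have A2: "a2 = VP1 c s' \<or> a2 = VP2 c s' \<or> a2 = VP1 c s' + VP2 c s'" using cs(4) by (simp add: Lset_def)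
  note TC = T1case[OF cs(1,2) s(1) _ _ i1(2) i2(2) pE, of _ _ a1 "VQ c s i1" a2 "VQ c s i2"]
  have h1: "a1 = VP1 c s' \<Longrightarrow> a2 = VP2 c s' \<Longrightarrow> ?thesis"
    using TC[OF i1(1) i2(1)] unfolding i1(3) i2(3) by simp
  have h2: "a1 = VP2 c s' \<Longrightarrow> a2 = VP1 c s' \<Longrightarrow> ?thesis"
    using TC[OF i2(1) i1(1)] unfolding i1(3) i2(3) by simp
  have h3: "a1 = VP1 c s' \<Longrightarrow> a2 = VP1 c s' + VP2 c s' \<Longrightarrow> ?thesis"
    using TC[OF i1(1) i3(1)] unfolding i1(3) i2(3) i3(2) by (simp add: add_ac)
  have h4: "a1 = VP1 c s' + VP2 c s' \<Longrightarrow> a2 = VP1 c s' \<Longrightarrow> ?thesis"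
    using TC[OF i2(1) i3(1)] unfolding i1(3) i2(3) i3(2) by (simp add: add_ac)
  have h5: "a1 = VP2 c s' \<Longrightarrow> a2 = VP1 c s' + VP2 c s' \<Longrightarrow> ?thesis"
    using TC[OF i3(1) i1(1)] unfolding i1(3) i2(3) i3(2) by (simp add: add_ac)
  have h6: "a1 = VP1 c s' + VP2 c s' \<Longrightarrow> a2 = VP2 c s' \<Longrightarrow> ?thesis"
    using TC[OF i3(1) i2(1)] unfolding i1(3) i2(3) i3(2) by (simp add: add_ac)
  show ?thesis using A1 A2 ne h1 h2 h3 h4 h5 h6 by blast
qed



lemma covd_perm: "covd v1 v2 v3 \<Longrightarrow> covd v2 v1 v3" "covd v1 v2 v3 \<Longrightarrow> covd v1 v3 v2" "covd v1 v2 v3 \<Longrightarrow> covd v3 v1 v2"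
  unfolding covd_def by blast+

lemma covd_trans: assumes "covd u1 u2 u3" "v1 \<in> span_of [u1,u2,u3]" "v2 \<in> span_of [u1,u2,u3]" "v3 \<in> span_of [u1,u2,u3]"
  shows "covd v1 v2 v3"
proof -
  obtain K where K: "K \<in> Fam" "u1 \<in> K" "u2 \<in> K" "u3 \<in> K" using assms(1) unfolding covd_def by blast
  have "span_of [u1,u2,u3] \<subseteq> K" using span3_sub[OF Fam_closed[OF K(1)] K(2-4)] .
  then show ?thesis using K(1) assms(2-4) unfolding covd_def by blast
qed

lemma pair0_nz: "y \<in> vecs 4 \<Longrightarrow> pair 0 y \<noteq> 0 \<Longrightarrow> y \<noteq> 0"
  using pair_0 by auto

lemma coverC: assumes v: "u \<in> vecs 8" "z1 \<in> vecs 8" "z2 \<in> vecs 8" and ind: "lin_indep [u,z1,z2]"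
  and x: "xp z1 = 0" "xp z2 = 0"
  shows "covd u z1 z2"
proof (cases "xp u = 0")
  case True then show ?thesis using T3 v x by blast
next
  case False
  have i: "u \<noteq> 0" "z1 \<noteq> 0" "z2 \<noteq> 0" "z1 + z2 \<noteq> 0" using ind unfolding indep3 by auto
  have e: "u = pair (xp u) (yp u)" "z1 = pair 0 (yp z1)" "z2 = pair 0 (yp z2)" using vecs8_pair v x by metis+
  have "z1 + z2 = pair 0 (yp z1 + yp z2)" using e(2,3) pair_add by (metis add_0_left)
  then have "yp z1 + yp z2 \<noteq> 0" using i(4) pair_0 by auto
  moreover have "yp z1 \<noteq> 0" "yp z2 \<noteq> 0" using i(2,3) e(2,3) pair_0 by metis+
  ultimately have "covd (pair (xp u) (yp u)) (pair 0 (yp z1)) (pair 0 (yp z2))"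
    using T2[OF xp_vecs yp_vecs yp_vecs yp_vecs False] by blast
  then show ?thesis using e by simp
qed

lemma coverB: assumes v: "u1 \<in> vecs 8" "u2 \<in> vecs 8" "z \<in> vecs 8" and ind: "lin_indep [u1,u2,z]"
  and x: "xp z = 0"
  shows "covd u1 u2 z"
proof -
  have i: "u1 \<noteq> 0 \<and> u2 \<noteq> 0 \<and> z \<noteq> 0 \<and> u1+u2 \<noteq> 0 \<and> u1+z \<noteq> 0 \<and> u2+z \<noteq> 0 \<and> u1+u2+z \<noteq> 0" using ind unfolding indep3 .
  show ?thesis
  proof (cases "xp u1 \<noteq> 0 \<and> xp u2 \<noteq> 0 \<and> xp u1 + xp u2 \<noteq> 0")
    case True
    have e: "u1 = pair (xp u1) (yp u1)" "u2 = pair (xp u2) (yp u2)" "z = pair 0 (yp z)" using vecs8_pair v x by metis+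
    have "yp z \<noteq> 0" using i e(3) pair_0 by metis
    then have "covd (pair (xp u1) (yp u1)) (pair (xp u2) (yp u2)) (pair 0 (yp z))"
      using T1[OF xp_vecs xp_vecs yp_vecs yp_vecs yp_vecs] True by blast
    then show ?thesis using e by simp
  next
    case False
    then consider "xp u1 = 0" | "xp u2 = 0" | "xp u1 + xp u2 = 0" by blast
    then show ?thesis
    proof cases
      case 1
      have "lin_indep [u2,u1,z]" using i unfolding indep3 by (simp add: add_ac)
      then have "covd u2 u1 z" using coverC[OF v(2,1,3)] 1 x by blast
      then show ?thesis by (rule covd_perm)
    next
      case 2
      have "lin_indep [u1,u2,z]" using ind .
      then show ?thesis using coverC[OF v(1,2,3)] 2 x by blast
    next
      case 3
      have "lin_indep [u1,u1+u2,z]" using i unfolding indep3 by (simp add: add_ac)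
      moreover have "xp (u1 + u2) = 0" using 3 by (simp add: xp_add)
      ultimately have "covd u1 (u1+u2) z" using coverC[OF v(1) vecs_add[OF v(1,2)] v(3)] x by blast
      then show ?thesis by (rule covd_trans) (simp_all add: span3 add_ac)
    qed
  qed
qed

lemma cover_main: assumes v: "v1 \<in> vecs 8" "v2 \<in> vecs 8" "v3 \<in> vecs 8" and ind: "lin_indep [v1,v2,v3]"
  shows "covd v1 v2 v3"
proof (cases "lin_indep [xp v1, xp v2, xp v3]")
  case True
  obtain r0 r1 r2 where r: "r0 \<in> vecs 4" "r1 \<in> vecs 4" "r2 \<in> vecs 4"
    "Bx r0 r1 r2 (xp v1) = yp v1" "Bx r0 r1 r2 (xp v2) = yp v2" "Bx r0 r1 r2 (xp v3) = yp v3"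
    using T0[OF xp_vecs xp_vecs xp_vecs True yp_vecs yp_vecs yp_vecs] by blast
  have e: "v1 = pair (xp v1) (Bx r0 r1 r2 (xp v1))" "v2 = pair (xp v2) (Bx r0 r1 r2 (xp v2))"
    "v3 = pair (xp v3) (Bx r0 r1 r2 (xp v3))"
    unfolding r(4-6) using vecs8_pair[OF v(1)] vecs8_pair[OF v(2)] vecs8_pair[OF v(3)] by simp_all
  have "v1 \<in> span_of (basB r0 r1 r2)" "v2 \<in> span_of (basB r0 r1 r2)" "v3 \<in> span_of (basB r0 r1 r2)"
    by (subst e(1), rule memB[OF xp_vecs]) (subst e(2), rule memB[OF xp_vecs], subst e(3), rule memB[OF xp_vecs])
  then show ?thesis by (rule covdI[OF blkB_in[OF r(1-3)]])
next
  case False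
  have i: "v1 \<noteq> 0 \<and> v2 \<noteq> 0 \<and> v3 \<noteq> 0 \<and> v1+v2 \<noteq> 0 \<and> v1+v3 \<noteq> 0 \<and> v2+v3 \<noteq> 0 \<and> v1+v2+v3 \<noteq> 0" using ind unfolding indep3 .
  have w: "v1 + v2 \<in> vecs 8" "v1 + v3 \<in> vecs 8" "v2 + v3 \<in> vecs 8" "v1 + v2 + v3 \<in> vecs 8"
    using vecs_add[OF v(1) v(2)] vecs_add[OF v(1) v(3)] vecs_add[OF v(2) v(3)] vecs_add[OF vecs_add[OF v(1) v(2)] v(3)] by auto
  have dis: "xp v1 = 0 \<or> xp v2 = 0 \<or> xp v3 = 0 \<or> xp v1 + xp v2 = 0 \<or> xp v1 + xp v3 = 0 \<or>
    xp v2 + xp v3 = 0 \<or> xp v1 + xp v2 + xp v3 = 0" using False unfolding indep3 by blast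
  then consider "xp v1 = 0" | "xp v2 = 0" | "xp v3 = 0" | "xp v1 + xp v2 = 0" | "xp v1 + xp v3 = 0"
    | "xp v2 + xp v3 = 0" | "xp v1 + xp v2 + xp v3 = 0" by blast
  then show ?thesis
  proof cases
    case 1
    have "lin_indep [v2,v3,v1]" using i unfolding indep3 by (simp add: add_ac)
    then have "covd v2 v3 v1" using coverB[OF v(2,3,1)] 1 by blast
    then show ?thesis by (rule covd_trans) (simp_all add: span3)
  next
    case 2
    have "lin_indep [v1,v3,v2]" using i unfolding indep3 by (simp add: add_ac)
    then have "covd v1 v3 v2" using coverB[OF v(1,3,2)] 2 by blast
    then show ?thesis by (rule covd_trans) (simp_all add: span3)
  next
    case 3
    show ?thesis by (rule coverB[OF v ind 3])
  next
    case 4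
    have "lin_indep [v1,v3,v1+v2]" using i unfolding indep3 by (simp add: add_ac)
    moreover have "xp (v1 + v2) = 0" using 4 by (simp add: xp_add)
    ultimately have "covd v1 v3 (v1+v2)" using coverB[OF v(1,3) w(1)] by blast
    then show ?thesis by (rule covd_trans) (simp_all add: span3 add_ac)
  next
    case 5
    have "lin_indep [v1,v2,v1+v3]" using i unfolding indep3 by (simp add: add_ac)
    moreover have "xp (v1 + v3) = 0" using 5 by (simp add: xp_add)
    ultimately have "covd v1 v2 (v1+v3)" using coverB[OF v(1,2) w(2)] by blast
    then show ?thesis by (rule covd_trans) (simp_all add: span3 add_ac)
  next
    case 6
    have "lin_indep [v1,v2,v2+v3]" using i unfolding indep3 by (simp add: add_ac)
    moreover have "xp (v2 + v3) = 0" using 6 by (simp add: xp_add)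
    ultimately have "covd v1 v2 (v2+v3)" using coverB[OF v(1,2) w(3)] by blast
    then show ?thesis by (rule covd_trans) (simp_all add: span3 add_ac)
  next
    case 7
    have "lin_indep [v1,v2,v1+v2+v3]" using i unfolding indep3 by (simp add: add_ac)
    moreover have "xp (v1 + v2 + v3) = 0" using 7 by (simp add: xp_add)
    ultimately have "covd v1 v2 (v1+v2+v3)" using coverB[OF v(1,2) w(4)] by blast
    then show ?thesis by (rule covd_trans) (simp_all add: span3 add_ac)
  qed
qed



lemma lin_comb4_smul: "lin_comb [a,b,c,d] [u,v,w,x] = smul a u + smul b v + smul c w + smul d x"
  by (simp add: lin_comb4 smul_def plus_fun_def)

lemma indep_smul: assumes "\<And>a b c d. smul a u + smul b v + smul c w + smul d x = 0 \<Longrightarrow> a = 0 \<and> b = 0 \<and> c = 0 \<and> d = 0"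
  shows "lin_indep [u,v,w,x::nat\<Rightarrow>bit]"
  unfolding lin_indep_def
proof (intro allI impI)
  fix cs :: "bit list" assume l: "length cs = length [u,v,w,x]" and z: "lin_comb cs [u,v,w,x] = (\<lambda>_. 0)"
  have l4: "length cs = 4" using l by simp
  obtain a b c d where cs: "cs = [a,b,c,d]" using len4_cases[OF l4] by auto
  have "smul a u + smul b v + smul c w + smul d x = 0" using z unfolding cs lin_comb4_smul by (simp add: zero_fun_def)
  then show "\<forall>c\<in>set cs. c = 0" using assms cs by simp
qed

lemma xp_smul: "xp (smul a v) = smul a (xp v)" by (rule ext) (simp add: xp_def smul_def)
lemma yp_smul: "yp (smul a v) = smul a (yp v)" by (rule ext) (simp add: yp_def smul_def)

lemma ev_comb: assumes "smul a (ev 0) + smul b (ev 1) + smul c (ev 2) + smul d (ev 3) = 0"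
  shows "a = 0 \<and> b = 0 \<and> c = 0 \<and> d = 0"
proof -
  have "(smul a (ev 0) + smul b (ev 1) + smul c (ev 2) + smul d (ev 3)) k = 0" for k using assms by simp
  from this[of 0] this[of 1] this[of 2] this[of 3] show ?thesis by (simp add: smul_def ev_def)
qed

lemma indepW: "lin_indep [pair 0 (ev 0), pair 0 (ev 1), pair 0 (ev 2), pair 0 (ev 3)]"
proof (rule indep_smul)
  fix a b c d assume "smul a (pair 0 (ev 0)) + smul b (pair 0 (ev 1)) + smul c (pair 0 (ev 2)) + smul d (pair 0 (ev 3)) = 0"
  then have "yp (smul a (pair 0 (ev 0)) + smul b (pair 0 (ev 1)) + smul c (pair 0 (ev 2)) + smul d (pair 0 (ev 3))) = 0" by simp
  then have "smul a (ev 0) + smul b (ev 1) + smul c (ev 2) + smul d (ev 3) = 0"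
    by (simp add: yp_add yp_smul)
  then show "a = 0 \<and> b = 0 \<and> c = 0 \<and> d = 0" by (rule ev_comb)
qed

lemma indepB: "lin_indep (basB r0 r1 r2)"
  unfolding basB_def
proof (rule indep_smul)
  fix a b c d assume "smul a (pair (ev 0) r0) + smul b (pair (ev 1) r1) + smul c (pair (ev 2) r2) + smul d (pair (ev 3) (Lm r0 r1 r2)) = 0"
  then have "xp (smul a (pair (ev 0) r0) + smul b (pair (ev 1) r1) + smul c (pair (ev 2) r2) + smul d (pair (ev 3) (Lm r0 r1 r2))) = 0" by simp
  then have "smul a (ev 0) + smul b (ev 1) + smul c (ev 2) + smul d (ev 3) = 0"
    by (simp add: xp_add xp_smul)
  then show "a = 0 \<and> b = 0 \<and> c = 0 \<and> d = 0" by (rule ev_comb)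
qed

lemma indep2: assumes "c < 7" "s' < 5" "s < 5" shows "lin_indep (bas2 c s' s i j)"
  unfolding bas2_def
proof (rule indep_smul)
  note P = VP_facts[OF assms(1,2)] and E = VP_facts[OF assms(1,3)]
  fix a b c' d
  assume z: "smul a (pair (VP1 c s') (VQ c s i)) + smul b (pair (VP2 c s') (VQ c s j)) + smul c' (pair 0 (VP1 c s)) + smul d (pair 0 (VP2 c s)) = 0"
  then have "xp (smul a (pair (VP1 c s') (VQ c s i)) + smul b (pair (VP2 c s') (VQ c s j)) + smul c' (pair 0 (VP1 c s)) + smul d (pair 0 (VP2 c s))) = 0" by simp
  then have x: "smul a (VP1 c s') + smul b (VP2 c s') = 0"
    using P(1,2) by (simp add: xp_add xp_smul)
  have ab: "a = 0 \<and> b = 0"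
    using x P(3-5) by (cases a; cases b) simp_all
  have "yp (smul a (pair (VP1 c s') (VQ c s i)) + smul b (pair (VP2 c s') (VQ c s j)) + smul c' (pair 0 (VP1 c s)) + smul d (pair 0 (VP2 c s))) = 0" using z by simp
  then have y: "smul c' (VP1 c s) + smul d (VP2 c s) = 0"
    using ab E(1,2) by (simp add: yp_add yp_smul)
  have "c' = 0 \<and> d = 0"
    using y E(3-5) by (cases c'; cases d) simp_all
  then show "a = 0 \<and> b = 0 \<and> c' = 0 \<and> d = 0" using ab by simp
qed

lemma in_sub4: "length bs = 4 \<Longrightarrow> set bs \<subseteq> vecs 8 \<Longrightarrow> lin_indep bs \<Longrightarrow> span_of bs \<in> subspaces_dim TYPE(bit) 8 4"
  unfolding subspaces_dim_def by blast

lemma Fam_sub: "Fam \<subseteq> subspaces_dim TYPE(bit) 8 4"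
proof
  fix K assume "K \<in> Fam"
  then consider "K = blkW"
    | r0 r1 r2 where "K = span_of (basB r0 r1 r2)"
    | c s' s i j where "c < 7" "s' < 5" "s < 5" "K = span_of (bas2 c s' s i j)"
    unfolding Fam_def by auto
  then show "K \<in> subspaces_dim TYPE(bit) 8 4"
  proof cases
    case 1 then show ?thesis unfolding blkW_def using in_sub4[OF _ _ indepW] by simp
  next
    case 2 then show ?thesis using in_sub4[OF _ _ indepB] by (simp add: basB_def)
  next
    case 3 then show ?thesis using in_sub4[OF _ _ indep2[OF 3(1-3)]] by (simp add: bas2_def)
  qed
qed

lemma Fam_card: "finite Fam \<and> card Fam \<le> 6897"
proof -
  let ?V = "vecs 4 :: (nat \<Rightarrow> bit) set"
  let ?I = "{..<7::nat} \<times> {..<5::nat} \<times> {..<5::nat} \<times> {..<4::nat} \<times> {..<4::nat}"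
  let ?A = "(\<lambda>(r0,r1,r2). span_of (basB r0 r1 r2)) ` (?V \<times> ?V \<times> ?V)"
  let ?B = "(\<lambda>(c,s',s,i,j). span_of (bas2 c s' s i j)) ` ?I"
  have fV: "finite (?V \<times> ?V \<times> ?V)" using finite_vecs4 by (blast intro: finite_cartesian_product)
  have cV: "card (?V \<times> ?V \<times> ?V) = 4096" by (simp add: card_cartesian_product card_vecs4)
  have fI: "finite ?I" by simp
  have cI: "card ?I = 2800" by (simp add: card_cartesian_product)
  have fA: "finite ?A" using fV by simp
  have fB: "finite ?B" using fI by simp
  have cA: "card ?A \<le> 4096" using card_image_le[OF fV] cV by simp
  have cB: "card ?B \<le> 2800" using card_image_le[OF fI] cI by simp
  have c1: "card (?A \<union> ?B) \<le> 6896" using card_Un_le[of ?A ?B] cA cB by simp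
  have e: "Fam = insert blkW (?A \<union> ?B)" unfolding Fam_def by simp
  have fU: "finite (?A \<union> ?B)" using fA fB by simp
  have f: "finite Fam" unfolding e using fU by simp
  have c2: "card (insert blkW (?A \<union> ?B)) \<le> Suc (card (?A \<union> ?B))" using fU by (simp add: card_insert_if)
  have "card Fam \<le> 6897" unfolding e using c1 c2 by linarith
  then show ?thesis using f by blast
qed

theorem mainTheorem13:
  shows "covering_number TYPE(bit) 8 4 3 \<le> 6897"
proof -
  have cov: "\<forall>R\<in>subspaces_dim TYPE(bit) 8 3. \<exists>K\<in>Fam. R \<subseteq> K"
  proof
    fix R assume "R \<in> subspaces_dim TYPE(bit) 8 3"
    then obtain vs where vs: "length vs = 3" "set vs \<subseteq> vecs 8" "lin_indep vs" "R = span_of vs"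
      unfolding subspaces_dim_def by blast
    obtain v1 v2 v3 where e: "vs = [v1,v2,v3]" using len3_cases[OF vs(1)] by blast
    have "covd v1 v2 v3" using cover_main vs e by simp
    then obtain K where K: "K \<in> Fam" "v1 \<in> K" "v2 \<in> K" "v3 \<in> K" unfolding covd_def by blast
    have "R \<subseteq> K" using span3_sub[OF Fam_closed[OF K(1)] K(2-4)] vs(4) e by simp
    then show "\<exists>K\<in>Fam. R \<subseteq> K" using K(1) by blast
  qed
  have P: "\<exists>\<F>. \<F> \<subseteq> subspaces_dim TYPE(bit) 8 4 \<and> finite \<F> \<and> card \<F> = card Fam \<and>
       (\<forall>R\<in>subspaces_dim TYPE(bit) 8 3. \<exists>K\<in>\<F>. R \<subseteq> K)"
    using Fam_sub Fam_card cov by blast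
  have "covering_number TYPE(bit) 8 4 3 \<le> card Fam"
    unfolding covering_number_def by (rule Least_le, use P in blast)
  then show ?thesis using Fam_card by simp
qed

end
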